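(* Assume $d\ge3$. For every $a\in\mathcal K_d$, $$\bigl(B(a)-d\bigr)\bigl(d+2\sqrt{d-1}\bigr)\le A(a)B(a)-d^2,$$ where the right side lies in $[0,\infty]$ (it is $+\infty$, and the inequality strict, if some $a_i=0$). Equality holds if and only if $a=\mathbf 1$ or $a$ is a coordinate permutation of $$a_\star:=\Big(\frac{d\sqrt{d-1}}{\sqrt{d-1}+d-1},\frac{d}{\sqrt{d-1}+d-1},\dots,\frac{d}{\sqrt{d-1}+d-1}\Big).$$
   Context: $\mathcal K_d:=\{a\in\mathbb R_+^d:\sum_{i=1}^d a_i=d\}$. For $a\in\mathcal K_d$, $A(a):=\sum_{i=1}^d 1/a_i\in[d,\infty]$ (with $A(a)=\infty$ if some $a_i=0$) and $B(a):=\sum_{i=1}^d a_i^2$. *)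

theory Defs
  imports "HOL-Analysis.Analysis" "HOL-Library.Extended_Real"
begin

text \<open>Vectors in R^d are represented as functions nat => real, only indices i < d matter
  (coordinates a_1..a_d correspond to a 0 .. a (d-1)).\<close>

definition K :: "nat \<Rightarrow> (nat \<Rightarrow> real) set" where
  "K d = {a. (\<forall>i<d. 0 \<le> a i) \<and> (\<Sum>i<d. a i) = real d}"

definition A_fun :: "nat \<Rightarrow> (nat \<Rightarrow> real) \<Rightarrow> ereal" where
  "A_fun d a = (if \<exists>i<d. a i = 0 then \<infinity> else ereal (\<Sum>i<d. 1 / a i))"

definition B_fun :: "nat \<Rightarrow> (nat \<Rightarrow> real) \<Rightarrow> real" where
  "B_fun d a = (\<Sum>i<d. (a i)^2)"

definition a_star :: "nat \<Rightarrow> nat \<Rightarrow> real" where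
  "a_star d i = (if i = 0 then real d * sqrt (real d - 1) / (sqrt (real d - 1) + real d - 1)
                 else real d / (sqrt (real d - 1) + real d - 1))"

end

theory Submission imports Defs begin

lemma quad_nonneg:
  fixes a b c x :: real
  assumes "a > 0" "b^2 \<le> 4*a*c"
  shows "a*x^2 + b*x + c \<ge> 0"
proof -
  have "4*a*(a*x^2 + b*x + c) = (2*a*x+b)^2 + (4*a*c - b^2)"
    by (simp add: algebra_simps power2_eq_square)
  also have "\<dots> \<ge> 0" using assms by simp
  finally show ?thesis using assms
    by (simp add: zero_le_mult_iff)
qed

lemma f_nonneg:
  fixes r x :: real
  assumes "r*r \<ge> 2" "r > 0" "0 \<le> x" "x \<le> 1"
  shows "(r-1)^2 - 2*r*(r*r-2)*x + (2*(r+1)^2*r*r - 2*r)*x^2 - (r+1)^2*r*r*x^3 \<ge> 0"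
proof -
  have r1: "r > 6/5"
  proof (rule ccontr)
    assume "\<not> r > 6/5"
    hence "r*r \<le> (6/5)*(6/5)" using assms by (intro mult_mono) auto
    thus False using assms by simp
  qed
  have "x^3 \<le> x^2" using assms by (intro power_decreasing) auto
  hence "(r+1)^2*r*r*x^3 \<le> (r+1)^2*r*r*x^2"
    using assms by (intro mult_left_mono) auto
  moreover have "((r+1)^2*r*r - 2*r)*x^2 + (- 2*r*(r*r-2))*x + (r-1)^2 \<ge> 0"
  proof (rule quad_nonneg)
    have "(r+1)^2 \<ge> 2^2" using r1 by (intro power_mono) auto
    hence "(r+1)^2*r \<ge> 4*1" using r1 by (intro mult_mono) auto
    hence "(r+1)^2*r*r \<ge> 4*r" using r1 by (intro mult_right_mono) auto
    thus "(r+1)^2*r*r - 2*r > 0" using r1 by simp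
    have "2*r^2 \<ge> 4" using assms by (simp add: power2_eq_square)
    hence "2*r^2*(r-1) \<ge> 4*(r-1)" using r1 by (intro mult_right_mono) auto
    hence p: "2*r^3 - 2*r^2 + r - 2 > 0" using r1 by (simp add: algebra_simps power2_eq_square power3_eq_cube)
    have "4*((r+1)^2*r*r - 2*r)*(r-1)^2 - (- 2*r*(r*r-2))^2 = 4*r*(2*r^3 - 2*r^2 + r - 2)"
      by (simp add: algebra_simps power2_eq_square power3_eq_cube)
    also have "\<dots> \<ge> 0" using p assms by simp
    finally show "(- 2*r*(r*r-2))^2 \<le> 4*((r+1)^2*r*r - 2*r)*(r-1)^2" by simp
  qed
  ultimately show ?thesis by (simp add: algebra_simps power2_eq_square)
qed
lemma core_id:
  fixes r x :: real
  assumes "r > 0" "0 \<le> x" "x < 1"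
  defines "t \<equiv> 1 + r^2*x" and "u \<equiv> 1 - x" and "d \<equiv> r^2 + 1"
  defines "B0 \<equiv> t^2 + r^2*u^2"
  shows "(d*(1/t+2/u) - d*(2/(u*t)+1/u^2) + B0/(u^2*t))*B0 - d^2 - (r+1)^2*(B0-d)
     = d*r^2*x^2*(r*(r+1)*x-(r-1))^2/(u*t)"
proof -
  have t0: "t > 0" unfolding t_def using assms by (simp add: add_pos_nonneg)
  have u0: "u > 0" unfolding u_def using assms by simp
  have h1: "d*(1/t+2/u) - d*(2/(u*t)+1/u^2) + B0/(u^2*t)
      = (d*u^2 + 2*d*u*t - 2*d*u - d*t + B0)/(u^2*t)"
    using t0 u0 by (simp add: field_simps power2_eq_square)
  have h2: "d*u^2 + 2*d*u*t - 2*d*u - d*t + B0 = u*(d*(1+(r^2-1)*x))"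
    unfolding B0_def t_def u_def d_def by (simp add: algebra_simps power2_eq_square)
  have h3: "B0 = d*(1+r^2*x^2)"
    unfolding B0_def t_def u_def d_def by (simp add: algebra_simps power2_eq_square)
  have h4: "d*(1+(r^2-1)*x)*(1+r^2*x^2) - d*(u*t) - (r+1)^2*r^2*x^2*(u*t)
     = r^2*x^2*(r*(r+1)*x-(r-1))^2"
    unfolding t_def u_def d_def by (simp add: algebra_simps power2_eq_square)
  have "(d*(1/t+2/u) - d*(2/(u*t)+1/u^2) + B0/(u^2*t))*B0 - d^2 - (r+1)^2*(B0-d)
     = (d*(1+(r^2-1)*x))/(u*t) * (d*(1+r^2*x^2)) - d^2 - (r+1)^2*(d*r^2*x^2)"
  proof -
    have "(u*(d*(1+(r^2-1)*x)))/(u^2*t) = (d*(1+(r^2-1)*x))/(u*t)"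
      using u0 by (simp add: power2_eq_square)
    then show ?thesis unfolding h1 h2 using h3 by (simp add: power2_eq_square algebra_simps)
  qed
  also have "\<dots> = d*(d*(1+(r^2-1)*x)*(1+r^2*x^2) - d*(u*t) - (r+1)^2*r^2*x^2*(u*t))/(u*t)"
    using t0 u0 by (simp add: field_simps power2_eq_square)
  also have "\<dots> = d*r^2*x^2*(r*(r+1)*x-(r-1))^2/(u*t)" unfolding h4 by simp
  finally show ?thesis .
qed
lemma core_ineq:
  fixes r x :: real
  assumes "r > 0" "r*r \<ge> 2" "0 \<le> x" "x < 1"
  defines "t \<equiv> 1 + r^2*x" and "u \<equiv> 1 - x" and "d \<equiv> r^2 + 1"
  defines "B0 \<equiv> t^2 + r^2*u^2"
  shows "d*(1/t+2/u) - d*(2/(u*t)+1/u^2) + 2*B0/(u^2*t) - (r+1)^2 \<ge> 0"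
proof -
  have t0: "t > 0" unfolding t_def using assms by (simp add: add_pos_nonneg)
  have u0: "u > 0" unfolding u_def using assms by simp
  have h1: "d*(1/t+2/u) - d*(2/(u*t)+1/u^2) + 2*B0/(u^2*t) - (r+1)^2
      = (d*u^2 + 2*d*u*t - 2*d*u - d*t + 2*B0 - (r+1)^2*(u^2*t))/(u^2*t)"
    using t0 u0 by (simp add: field_simps power2_eq_square)
  have h2: "d*u^2 + 2*d*u*t - 2*d*u - d*t + 2*B0 - (r+1)^2*(u^2*t)
     = (r-1)^2 - 2*r*(r*r-2)*x + (2*(r+1)^2*r*r - 2*r)*x^2 - (r+1)^2*r*r*x^3"
    unfolding B0_def t_def u_def d_def by (simp add: algebra_simps power2_eq_square power3_eq_cube)
  show ?thesis unfolding h1 h2 using f_nonneg[of r x] assms t0 u0 by simp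
qed
lemma main_pos:
  fixes d :: nat and a :: "nat \<Rightarrow> real"
  assumes d3: "d \<ge> 3" and pos: "\<forall>i<d. a i > 0" and sumd: "(\<Sum>i<d. a i) = real d"
  defines "A \<equiv> (\<Sum>i<d. 1 / a i)" and "B \<equiv> (\<Sum>i<d. (a i)^2)" and "r \<equiv> sqrt (real d - 1)"
  shows "A*B - (real d)^2 - (real d + 2*r)*(B - real d) \<ge> 0 \<and>
    (A*B - (real d)^2 - (real d + 2*r)*(B - real d) = 0 \<longrightarrow>
     (\<forall>i<d. a i = 1) \<or> (\<exists>\<sigma>. \<sigma> permutes {..<d} \<and> (\<forall>i<d. a i = a_star d (\<sigma> i))))"
proof -
  have rr: "r^2 = real d - 1" unfolding r_def using d3 by simp
  have r0: "r > 0" unfolding r_def using d3 by simp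
  have r2: "r*r \<ge> 2" using rr d3 by (simp add: power2_eq_square)
  have dr: "real d = r^2 + 1" using rr by simp
  have c: "real d + 2*r = (r+1)^2" using dr by (simp add: power2_eq_square algebra_simps)
  obtain k where k: "k < d" "\<forall>i<d. a i \<le> a k"
  proof -
    have fin: "finite (a ` {..<d})" "a ` {..<d} \<noteq> {}" using d3 by (auto simp: lessThan_empty_iff)
    obtain k where "k \<in> {..<d}" "a k = Max (a ` {..<d})"
      using Max_in[OF fin] by auto
    then show ?thesis using that[of k] fin by auto
  qed
  define t where "t = a k"
  define x where "x = 1 - (real d - t)/r^2"
  define u where "u = 1 - x"
  have tx: "t = 1 + r^2*x" unfolding x_def using r0 dr by (simp add: field_simps)
  have t1: "t \<ge> 1"
  proof -
    have "(\<Sum>i<d. a i) \<le> (\<Sum>i<d. t)" using k unfolding t_def by (intro sum_mono) auto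
    then have "real d \<le> real d * t" using sumd by simp
    then show ?thesis using d3 by simp
  qed
  have tlt: "t < real d"
  proof -
    have "(\<Sum>i<d. a i) = a k + (\<Sum>i\<in>{..<d}-{k}. a i)"
      using k by (simp add: sum.remove)
    moreover have "(\<Sum>i\<in>{..<d}-{k}. a i) > 0"
    proof (rule sum_pos)
        have "(if k=0 then 1 else 0) \<in> {..<d} - {k}" using d3 by auto
      then show "{..<d} - {k} \<noteq> {}" by blast
    qed (use pos in auto)
    ultimately show ?thesis using sumd unfolding t_def by simp
  qed
  have x0: "x \<ge> 0" unfolding x_def using t1 dr r0 by (simp add: field_simps)
  have x1: "x < 1" unfolding x_def using tlt r0 by (simp add: field_simps)
  have t0: "t > 0" using t1 by simp
  have u0: "u > 0" unfolding u_def using x1 by simp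
  have ut: "u \<le> t" unfolding u_def using x0 t1 by simp
  define T where "T i = (u - a i)^2*(t - a i)/(u^2*t*a i)" for i
  define al where "al = real d*(1/t+2/u) - real d*(2/(u*t)+1/u^2)"
  define be where "be = 1/(u^2*t)"
  define L where "L = al + be*B"
  define B0 where "B0 = t^2 + r^2*u^2"
  define c where "c = (r+1)^2"
  have hterm: "1/a i = 1/t + 2/u - (2/(u*t)+1/u^2)*a i + be*(a i)^2 + T i" if "i<d" for i
  proof -
    have "a i > 0" using pos that by auto
    then show ?thesis unfolding T_def be_def power2_eq_square using t0 u0
      by (simp add: field_simps)
  qed
  have AL: "A = L + (\<Sum>i<d. T i)"
  proof -
    have "A = (\<Sum>i<d. (1/t + 2/u) - (2/(u*t)+1/u^2)*a i + be*(a i)^2 + T i)"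
      unfolding A_def using hterm by (intro sum.cong) auto
    also have "\<dots> = real d*(1/t+2/u) - (2/(u*t)+1/u^2)*(\<Sum>i<d. a i) + be*B + (\<Sum>i<d. T i)"
      unfolding B_def by (simp add: sum.distrib sum_subtractf sum_distrib_left)
    finally show ?thesis unfolding L_def al_def using sumd by simp
  qed
  have Tnn: "T i \<ge> 0" if "i<d" for i
  proof -
    have "a i > 0" "a i \<le> t" using pos that k unfolding t_def by auto
    then show ?thesis unfolding T_def using t0 u0
      by (intro divide_nonneg_pos mult_nonneg_nonneg) auto
  qed
  have BB0: "B \<ge> B0"
  proof -
    have "(\<Sum>i<d. (a i - u)^2) \<ge> (a k - u)^2"
      using k by (intro member_le_sum) auto
    moreover have "(\<Sum>i<d. (a i - u)^2) = B - 2*u*real d + real d*u^2"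
    proof -
      have "(\<Sum>i<d. (a i - u)^2) = (\<Sum>i<d. (a i)^2 - 2*u*a i + u^2)"
        by (intro sum.cong) (auto simp: power2_diff)
      also have "\<dots> = B - 2*u*(\<Sum>i<d. a i) + real d*u^2"
        unfolding B_def by (simp add: sum.distrib sum_subtractf sum_distrib_left)
      finally show ?thesis using sumd by simp
    qed
    moreover have "B0 = 2*u*real d - real d*u^2 + (t-u)^2"
      unfolding B0_def u_def using tx dr by (simp add: algebra_simps power2_eq_square)
    ultimately show ?thesis unfolding t_def by simp
  qed
  have Bpos: "B > 0"
  proof -
    have "B \<ge> (a k)^2" unfolding B_def using k by (intro member_le_sum) auto
    then show ?thesis using t0 unfolding t_def by (smt (verit) zero_less_power)
  qed
  define Q0 where "Q0 = (al + be*B0)*B0 - (real d)^2 - c*(B0 - real d)"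
  have Eid: "A*B - (real d)^2 - (real d + 2*r)*(B - real d)
     = (\<Sum>i<d. T i)*B + Q0 + (B - B0)*(L + be*B0 - c)"
    unfolding AL Q0_def c[symmetric] c_def L_def by (simp add: algebra_simps)
  have Q0eq: "Q0 = real d*r^2*x^2*(r*(r+1)*x-(r-1))^2/(u*t)"
    using core_id[OF r0 x0 x1] unfolding Q0_def al_def be_def c_def B0_def
    unfolding dr u_def tx by simp
  have Q0nn: "Q0 \<ge> 0" unfolding Q0eq using u0 t0 dr by simp
  have G: "al + 2*be*B0 - c \<ge> 0"
    using core_ineq[OF r0 r2 x0 x1] unfolding al_def be_def c_def B0_def
    unfolding dr u_def tx by simp
  have G2: "L + be*B0 - c \<ge> 0"
  proof -
    have "be*B \<ge> be*B0" unfolding be_def using BB0 t0 u0 by (intro mult_left_mono) auto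
    then show ?thesis using G unfolding L_def by simp
  qed
  have ST: "(\<Sum>i<d. T i) \<ge> 0" using Tnn by (intro sum_nonneg) auto
  have P1: "(\<Sum>i<d. T i)*B \<ge> 0" using ST Bpos by simp
  have P3: "(B - B0)*(L + be*B0 - c) \<ge> 0" using BB0 G2 by simp
  have E: "A*B - (real d)^2 - (real d + 2*r)*(B - real d) \<ge> 0"
    unfolding Eid using P1 P3 Q0nn by simp
  moreover have "(\<forall>i<d. a i = 1) \<or> (\<exists>\<sigma>. \<sigma> permutes {..<d} \<and> (\<forall>i<d. a i = a_star d (\<sigma> i)))"
    if E0: "A*B - (real d)^2 - (real d + 2*r)*(B - real d) = 0"
  proof -
    have z1: "(\<Sum>i<d. T i)*B = 0" and z2: "Q0 = 0"
      using E0 P1 P3 Q0nn unfolding Eid by linarith+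
    have "(\<Sum>i<d. T i) = 0" using z1 Bpos by simp
    then have Tz: "T i = 0" if "i<d" for i
      using sum_nonneg_eq_0_iff[of "{..<d}" T] Tnn that by auto
    have vals: "a i = u \<or> a i = t" if "i<d" for i
    proof -
      have "a i > 0" using pos that by auto
      then have "(u - a i)^2*(t - a i) = 0" using Tz[OF that] t0 u0 unfolding T_def by simp
      then show ?thesis by auto
    qed
    have others: "a i = u" if "i<d" "i \<noteq> k" for i
    proof -
      have fin: "finite ({..<d}-{k})" by simp
      have "(\<Sum>i<d. a i) = a k + (\<Sum>i\<in>{..<d}-{k}. a i)"
        using k by (simp add: sum.remove)
      moreover have "card ({..<d}-{k}) = d - 1" using k by simp
      moreover have "real (d-1) * u = real d - t"
        unfolding u_def using tx dr d3 by (simp add: of_nat_diff algebra_simps)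
      ultimately have "(\<Sum>i\<in>{..<d}-{k}. a i - u) = 0"
        using sumd unfolding t_def by (simp add: sum_subtractf)
      moreover have "\<forall>j\<in>{..<d}-{k}. a j - u \<ge> 0" 
      proof
        fix j assume "j \<in> {..<d}-{k}"
        then have "a j = u \<or> a j = t" using vals by auto
        then show "a j - u \<ge> 0" using ut by auto
      qed
      ultimately have "\<forall>j\<in>{..<d}-{k}. a j - u = 0"
        using sum_nonneg_eq_0_iff[OF fin, of "\<lambda>j. a j - u"] by simp
      then show ?thesis using that by auto
    qed
    have "real d*r^2*x^2*(r*(r+1)*x-(r-1))^2 = 0"
      using z2 u0 t0 unfolding Q0eq by simp
    then have "x = 0 \<or> r*(r+1)*x-(r-1) = 0" using r0 d3 by simp
    then show ?thesis
    proof
      assume "x = 0"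
      then have "t = 1" "u = 1" using tx u_def by auto
      then have "\<forall>i<d. a i = 1" using others unfolding t_def
        by (intro allI impI, case_tac "i = k") auto
      then show ?thesis by simp
    next
      assume hx: "r*(r+1)*x-(r-1) = 0"
      have rp: "r*(r+1) > 0" using r0 by simp
      have "x*(r*(r+1)) = r-1" using hx by (simp add: algebra_simps)
      then have xv: "x = (r-1)/(r*(r+1))" using rp r0 by (auto simp: eq_divide_eq)
      have tv: "t = (r^2+1)/(r+1)"
      proof -
        have "t = 1 + r*r*(r-1)/(r*(r+1))" using tx xv by (simp add: power2_eq_square)
        also have "\<dots> = 1 + r*(r-1)/(r+1)" using r0 by simp
        also have "\<dots> = (r^2+1)/(r+1)" using r0 by (simp add: field_simps power2_eq_square)
        finally show ?thesis .
      qed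
      have uv: "u = (r^2+1)/(r*(r+1))"
      proof -
        have "r + r*r > 0" using r0 by (simp add: add_pos_pos)
        then show ?thesis unfolding u_def xv by (simp add: field_simps power2_eq_square)
      qed
      have as0: "a_star d 0 = t"
      proof -
        have "a_star d 0 = (r^2+1)*r/(r*(r+1))"
          unfolding a_star_def r_def[symmetric] using dr by (simp add: algebra_simps power2_eq_square)
        also have "\<dots> = t" unfolding tv using r0 by simp
        finally show ?thesis .
      qed
      have as1: "a_star d j = u" if "j \<noteq> 0" for j
      proof -
        have "a_star d j = (r^2+1)/(r*(r+1))"
          unfolding a_star_def r_def[symmetric] using dr that by (simp add: algebra_simps power2_eq_square)
        also have "\<dots> = u" unfolding uv ..
        finally show ?thesis .
      qed
      define \<sigma> where "\<sigma> = Transposition.transpose 0 k"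
      have "\<sigma> permutes {..<d}" unfolding \<sigma>_def using k d3 by (intro permutes_swap_id) auto
      moreover have "\<forall>i<d. a i = a_star d (\<sigma> i)"
      proof (intro allI impI)
        fix i assume "i<d"
        show "a i = a_star d (\<sigma> i)"
        proof (cases "i = k")
          case True then show ?thesis unfolding \<sigma>_def using as0 t_def by simp
        next
          case False
          have "\<sigma> i \<noteq> 0" unfolding \<sigma>_def using False
            by (auto simp: Transposition.transpose_def)
          then show ?thesis using as1 others[OF \<open>i<d\<close> False] by simp
        qed
      qed
      ultimately show ?thesis by blast
    qed
  qed
  ultimately show ?thesis by blast
qed

lemma a_star_vals:
  fixes d :: nat
  assumes d3: "d \<ge> 3"
  defines "r \<equiv> sqrt (real d - 1)"
  shows "a_star d 0 = (r^2+1)/(r+1)" "j \<noteq> 0 \<Longrightarrow> a_star d j = (r^2+1)/(r*(r+1))"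
    "r > 0" "real d = r^2 + 1"
proof -
  have rr: "r^2 = real d - 1" unfolding r_def using d3 by simp
  show r0: "r > 0" unfolding r_def using d3 by simp
  show dr: "real d = r^2 + 1" using rr by simp
  have "a_star d 0 = (r^2+1)*r/(r*(r+1))"
    unfolding a_star_def r_def[symmetric] using dr by (simp add: algebra_simps power2_eq_square)
  also have "\<dots> = (r^2+1)/(r+1)" using r0 by simp
  finally show "a_star d 0 = (r^2+1)/(r+1)" .
  show "j \<noteq> 0 \<Longrightarrow> a_star d j = (r^2+1)/(r*(r+1))"
    unfolding a_star_def r_def[symmetric] using dr by (simp add: algebra_simps power2_eq_square)
qed

lemma sum_a_star:
  fixes d :: nat and g :: "real \<Rightarrow> real"
  assumes "d \<ge> 3"
  shows "(\<Sum>i<d. g (a_star d i)) = g (a_star d 0) + (real d - 1) * g (a_star d 1)"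
proof -
  obtain m where m: "d = Suc m" using assms by (cases d) auto
  have "(\<Sum>i<d. g (a_star d i)) = g (a_star d 0) + (\<Sum>i<m. g (a_star d (Suc i)))"
    unfolding m by (rule sum.lessThan_Suc_shift)
  also have "(\<Sum>i<m. g (a_star d (Suc i))) = (\<Sum>i<m. g (a_star d 1))"
    by (intro sum.cong) (auto simp: a_star_def)
  finally show ?thesis using m by simp
qed

lemma converse_star:
  fixes d :: nat and a :: "nat \<Rightarrow> real" and \<sigma> :: "nat \<Rightarrow> nat"
  assumes d3: "d \<ge> 3" and sg: "\<sigma> permutes {..<d}" and ha: "\<forall>i<d. a i = a_star d (\<sigma> i)"
  defines "A \<equiv> (\<Sum>i<d. 1 / a i)" and "B \<equiv> (\<Sum>i<d. (a i)^2)" and "r \<equiv> sqrt (real d - 1)"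
  shows "A*B - (real d)^2 - (real d + 2*r)*(B - real d) = 0"
proof -
  have perm: "(\<Sum>i<d. g (a i)) = g (a_star d 0) + (real d - 1) * g (a_star d 1)" for g :: "real \<Rightarrow> real"
  proof -
    have "(\<Sum>i<d. g (a i)) = (\<Sum>i<d. (g \<circ> a_star d) (\<sigma> i))"
      using ha by (intro sum.cong) auto
    also have "\<dots> = (\<Sum>i<d. (g \<circ> a_star d) i)"
      using sum.permute[OF sg, of "g \<circ> a_star d"] by (simp add: comp_def)
    finally show ?thesis using sum_a_star[OF d3, of g] by simp
  qed
  note v = a_star_vals[OF d3, folded r_def]
  define T where "T = (r^2+1)/(r+1)"
  define U where "U = (r^2+1)/(r*(r+1))"
  have A: "A = 1/T + r^2*(1/U)" unfolding A_def perm T_def U_def using v by simp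
  have B: "B = T^2 + r^2*U^2" unfolding B_def T_def U_def using perm[of "\<lambda>x. x^2"] v by simp
  have r0: "r > 0" using v by simp
  have "r + 1 > 0" "r*(r+1) > 0" "r^2 + 1 > 0" using r0 by (auto simp: add_pos_pos)
  note pos = this
  have A': "A = (r^2-r+1)*(r+1)^2/(r^2+1)"
  proof -
    have "A = (r+1)/(r^2+1) + r^2*(r*(r+1))/(r^2+1)" unfolding A T_def U_def by simp
    also have "\<dots> = ((r+1) + r^2*(r*(r+1)))/(r^2+1)" by (simp add: add_divide_distrib)
    also have "(r+1) + r^2*(r*(r+1)) = (r^2-r+1)*(r+1)^2" by (simp add: algebra_simps power2_eq_square)
    finally show ?thesis .
  qed
  have B': "B = 2*(r^2+1)^2/(r+1)^2"
  proof -
    have "r^2*U^2 = T^2" unfolding T_def U_def using r0 by (simp add: power_divide power_mult_distrib)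
    then show ?thesis unfolding B T_def by (simp add: power_divide)
  qed
  have AB: "A*B = 2*(r^2-r+1)*(r^2+1)"
  proof -
    have nz: "(r+1)^2 \<noteq> 0" "r^2+1 \<noteq> 0" using pos by auto
    have gen: "P*X/Y * (2*Y^2/X) = 2*P*Y" if "X \<noteq> 0" "Y \<noteq> 0" for P X Y :: real
      using that by (simp add: field_simps power2_eq_square)
    show ?thesis unfolding A' B' using gen[OF nz] .
  qed
  have C: "(real d + 2*r)*(B - real d) = (r^2+1)*(r-1)^2"
  proof -
    have "real d + 2*r = (r+1)^2" unfolding v(4) by (simp add: power2_eq_square algebra_simps)
    moreover have "B - real d = (r^2+1)*(r-1)^2/(r+1)^2"
    proof -
      have nz: "(r+1)^2 \<noteq> 0" using pos by auto
      have "B - real d = (2*(r^2+1)^2 - (r^2+1)*(r+1)^2)/(r+1)^2"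
        unfolding B' v(4) using nz by (simp add: diff_divide_distrib)
      also have "2*(r^2+1)^2 - (r^2+1)*(r+1)^2 = (r^2+1)*(r-1)^2"
        by (simp add: algebra_simps power2_eq_square)
      finally show ?thesis .
    qed
    ultimately show ?thesis using pos by simp
  qed
  show ?thesis unfolding AB C unfolding v(4) by (simp add: algebra_simps power2_eq_square)
qed

theorem lemma7p2:
  fixes d :: nat and a :: "nat \<Rightarrow> real"
  assumes "d \<ge> 3" and "a \<in> K d"
  shows "ereal ((B_fun d a - real d) * (real d + 2 * sqrt (real d - 1)))
           \<le> A_fun d a * ereal (B_fun d a) - ereal ((real d)^2)
         \<and> (ereal ((B_fun d a - real d) * (real d + 2 * sqrt (real d - 1)))
           = A_fun d a * ereal (B_fun d a) - ereal ((real d)^2)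
         \<longleftrightarrow> (\<forall>i<d. a i = 1) \<or>
             (\<exists>\<sigma>. \<sigma> permutes {..<d} \<and> (\<forall>i<d. a i = a_star d (\<sigma> i))))"
proof -
  have d3: "d \<ge> 3" using assms(1) .
  from assms(2) have nn: "\<forall>i<d. 0 \<le> a i" and sm: "(\<Sum>i<d. a i) = real d"
    unfolding K_def by auto
  have Bpos: "B_fun d a > 0"
  proof -
    obtain i where i: "i<d" "a i > 0"
    proof (rule ccontr)
      assume "\<not> thesis"
      then have "\<forall>i<d. a i \<le> 0" using that by force
      then have "(\<Sum>i<d. a i) \<le> 0" by (intro sum_nonpos) auto
      then show False using sm d3 by simp
    qed
    have "(a i)^2 \<le> B_fun d a" unfolding B_fun_def using i by (intro member_le_sum) auto
    then show ?thesis using i by (smt (verit) zero_less_power)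
  qed
  note v = a_star_vals[OF d3]
  show ?thesis
  proof (cases "\<exists>i<d. a i = 0")
    case True
    then obtain i0 where i0: "i0 < d" "a i0 = 0" by blast
    have Ainf: "A_fun d a = \<infinity>" unfolding A_fun_def using True by simp
    have R: "A_fun d a * ereal (B_fun d a) - ereal ((real d)^2) = \<infinity>"
      unfolding Ainf using Bpos by simp
    have n1: "\<not> (\<forall>i<d. a i = 1)" using i0 by auto
    have n2: "\<not> (\<exists>\<sigma>. \<sigma> permutes {..<d} \<and> (\<forall>i<d. a i = a_star d (\<sigma> i)))"
    proof
      assume "\<exists>\<sigma>. \<sigma> permutes {..<d} \<and> (\<forall>i<d. a i = a_star d (\<sigma> i))"
      then obtain \<sigma> where "a i0 = a_star d (\<sigma> i0)" using i0 by blast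
      moreover have "a_star d j > 0" for j
        using v by (cases "j = 0") (auto simp: add_pos_pos)
      ultimately show False using i0 by (metis less_irrefl)
    qed
    show ?thesis unfolding R using n1 n2 by simp
  next
    case False
    then have pos: "\<forall>i<d. a i > 0" using nn by force
    define A where "A = (\<Sum>i<d. 1 / a i)"
    have Aeq: "A_fun d a = ereal A" unfolding A_fun_def A_def using False by simp
    have R: "A_fun d a * ereal (B_fun d a) - ereal ((real d)^2) = ereal (A * B_fun d a - (real d)^2)"
      unfolding Aeq by simp
    have E: "(B_fun d a - real d) * (real d + 2 * sqrt (real d - 1)) \<le> A * B_fun d a - (real d)^2
      \<longleftrightarrow> A * B_fun d a - (real d)^2 - (real d + 2 * sqrt (real d - 1))*(B_fun d a - real d) \<ge> 0"
      by (simp add: algebra_simps)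
    have E2: "(B_fun d a - real d) * (real d + 2 * sqrt (real d - 1)) = A * B_fun d a - (real d)^2
      \<longleftrightarrow> A * B_fun d a - (real d)^2 - (real d + 2 * sqrt (real d - 1))*(B_fun d a - real d) = 0"
      by (auto simp: algebra_simps power2_eq_square)
    note M = main_pos[OF d3 pos sm, folded A_def B_fun_def]
    have C1: "A * B_fun d a - (real d)^2 - (real d + 2 * sqrt (real d - 1))*(B_fun d a - real d) = 0"
      if "\<forall>i<d. a i = 1"
    proof -
      have "A = real d" unfolding A_def using that by simp
      moreover have "B_fun d a = real d" unfolding B_fun_def using that by simp
      ultimately show ?thesis by (simp add: power2_eq_square)
    qed
    have C2: "A * B_fun d a - (real d)^2 - (real d + 2 * sqrt (real d - 1))*(B_fun d a - real d) = 0"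
      if ex: "\<exists>\<sigma>. \<sigma> permutes {..<d} \<and> (\<forall>i<d. a i = a_star d (\<sigma> i))"
    proof -
      obtain \<sigma> where "\<sigma> permutes {..<d}" "\<forall>i<d. a i = a_star d (\<sigma> i)" using ex by blast
      from converse_star[OF d3 this] show ?thesis unfolding A_def B_fun_def .
    qed
    show ?thesis unfolding R ereal_less_eq ereal.inject E E2 using M C1 C2 by blast
  qed
qed
end
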